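(* Let $(\Delta,U,\mu_\Delta)$ be an expanding Young tower with exponentially small tail, and let $g,g':\Delta\to\mathbb R$ belong to $L^p(\mu_\Delta)$ for every $p<2$, with $g-g'$ bounded. With $G(x)=\sum_{k=0}^{\omega(x)-1}g(U^k\pi_0x)$ and $G'(x)=\sum_{k=0}^{\omega(x)-1}g'(U^k\pi_0x)$, $$\int g\,(e^{itG}-1)\,d\mu_\Delta=\int g'\,(e^{itG'}-1)\,d\mu_\Delta+O(t)\quad\text{as }t\to0.$$
   Context: Expanding Young tower: probability space $(\Delta,\mu_\Delta)$, measure-preserving $U$, partition $\{\Delta_{k,p}\}_{0\le k<r_p}$ with $U:\Delta_{k,p}\to\Delta_{k+1,p}$ and $U:\Delta_{r_p-1,p}\to\Delta_0=\bigcup_m\Delta_{0,m}$ measurable isomorphisms (with a bounded distortion condition). $\Delta_n=\bigcup_p\Delta_{n,p}$; exponentially small tail: $\mu_\Delta(\Delta_n)=O(\rho^n)$ for some $\rho<1$. $\omega(x)=n$ for $x\in\Delta_n$; $\pi_0:\Delta\to\Delta_0$ is the projection to the basis, $\pi_0(U^kx')=x'$ for $x'\in\Delta_{0,p}$, $k<r_p$. *)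

theory Defs
  imports "HOL-Probability.Probability" "HOL-Library.Landau_Symbols"
begin

text \<open>Tower pieces: D k p is the set Delta_{k,p} (relevant for p in P and k < r p).\<close>

definition tower_level :: "nat set \<Rightarrow> (nat \<Rightarrow> nat) \<Rightarrow> (nat \<Rightarrow> nat \<Rightarrow> 'a set) \<Rightarrow> nat \<Rightarrow> 'a set" where
  "tower_level P r D n = (\<Union>p\<in>{p\<in>P. n < r p}. D n p)"

definition meas_iso :: "'a measure \<Rightarrow> ('a \<Rightarrow> 'a) \<Rightarrow> 'a set \<Rightarrow> 'a set \<Rightarrow> bool" where
  "meas_iso M U A B \<longleftrightarrow> bij_betw U A B \<and>
     U \<in> measurable (restrict_space M A) (restrict_space M B) \<and>
     the_inv_into A U \<in> measurable (restrict_space M B) (restrict_space M A)"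

definition same_piece :: "nat set \<Rightarrow> (nat \<Rightarrow> nat) \<Rightarrow> (nat \<Rightarrow> nat \<Rightarrow> 'a set) \<Rightarrow> 'a \<Rightarrow> 'a \<Rightarrow> bool" where
  "same_piece P r D a b \<longleftrightarrow> (\<exists>p\<in>P. \<exists>k<r p. a \<in> D k p \<and> b \<in> D k p)"

definition sep_time :: "('a \<Rightarrow> 'a) \<Rightarrow> nat set \<Rightarrow> (nat \<Rightarrow> nat) \<Rightarrow> (nat \<Rightarrow> nat \<Rightarrow> 'a set) \<Rightarrow> 'a \<Rightarrow> 'a \<Rightarrow> enat" where
  "sep_time U P r D x y =
     (if \<exists>n. \<not> same_piece P r D ((U^^n) x) ((U^^n) y)
      then enat (LEAST n. \<not> same_piece P r D ((U^^n) x) ((U^^n) y)) else \<infinity>)"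

definition expanding_young_tower ::
  "'a measure \<Rightarrow> ('a \<Rightarrow> 'a) \<Rightarrow> nat set \<Rightarrow> (nat \<Rightarrow> nat) \<Rightarrow> (nat \<Rightarrow> nat \<Rightarrow> 'a set) \<Rightarrow> bool" where
  "expanding_young_tower M U P r D \<longleftrightarrow>
     prob_space M \<and> U \<in> measurable M M \<and> distr M M U = M \<and> P \<noteq> {} \<and>
     (\<forall>p\<in>P. 0 < r p) \<and>
     (\<forall>p\<in>P. \<forall>k<r p. D k p \<in> sets M) \<and>
     (\<Union>p\<in>P. \<Union>k\<in>{..<r p}. D k p) = space M \<and>
     (\<forall>p\<in>P. \<forall>q\<in>P. \<forall>k<r p. \<forall>l<r q. (k, p) \<noteq> (l, q) \<longrightarrow> D k p \<inter> D l q = {}) \<and>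
     (\<forall>p\<in>P. \<forall>k. Suc k < r p \<longrightarrow> meas_iso M U (D k p) (D (Suc k) p)) \<and>
     (\<forall>p\<in>P. meas_iso M U (D (r p - 1) p) (tower_level P r D 0)) \<and>
     (\<exists>J C \<beta>. J \<in> borel_measurable M \<and> 0 < \<beta> \<and> \<beta> < 1 \<and> (\<forall>x\<in>space M. 0 < J x) \<and>
        (\<forall>p\<in>P. \<forall>k<r p. \<forall>B\<in>sets M. B \<subseteq> D k p \<longrightarrow>
            emeasure M (U ` B) = (\<integral>\<^sup>+x\<in>B. ennreal (J x) \<partial>M)) \<and>
        (\<forall>p\<in>P. \<forall>k<r p. \<forall>x\<in>D k p. \<forall>y\<in>D k p. \<forall>n.
            enat n \<le> sep_time U P r D (U x) (U y) \<longrightarrow> \<bar>ln (J x) - ln (J y)\<bar> \<le> C * \<beta> ^ n))"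

definition exp_small_tail :: "'a measure \<Rightarrow> nat set \<Rightarrow> (nat \<Rightarrow> nat) \<Rightarrow> (nat \<Rightarrow> nat \<Rightarrow> 'a set) \<Rightarrow> bool" where
  "exp_small_tail M P r D \<longleftrightarrow>
     (\<exists>C \<rho>. 0 < \<rho> \<and> \<rho> < 1 \<and> (\<forall>n. measure M (tower_level P r D n) \<le> C * \<rho> ^ n))"

definition height :: "nat set \<Rightarrow> (nat \<Rightarrow> nat) \<Rightarrow> (nat \<Rightarrow> nat \<Rightarrow> 'a set) \<Rightarrow> 'a \<Rightarrow> nat" where
  "height P r D x = (THE n. \<exists>p\<in>P. n < r p \<and> x \<in> D n p)"

definition proj0 :: "('a \<Rightarrow> 'a) \<Rightarrow> nat set \<Rightarrow> (nat \<Rightarrow> nat) \<Rightarrow> (nat \<Rightarrow> nat \<Rightarrow> 'a set) \<Rightarrow> 'a \<Rightarrow> 'a" where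
  "proj0 U P r D x = (THE y. \<exists>p\<in>P. \<exists>k<r p. y \<in> D 0 p \<and> (U^^k) y = x)"

definition tower_sum :: "('a \<Rightarrow> 'a) \<Rightarrow> nat set \<Rightarrow> (nat \<Rightarrow> nat) \<Rightarrow> (nat \<Rightarrow> nat \<Rightarrow> 'a set) \<Rightarrow> ('a \<Rightarrow> real) \<Rightarrow> 'a \<Rightarrow> real" where
  "tower_sum U P r D g x = (\<Sum>k<height P r D x. g ((U^^k) (proj0 U P r D x)))"

end

theory Submission imports Defs "HOL-Probability.Characteristic_Functions"
begin

locale twr =
  fixes M :: "'a measure" and U :: "'a \<Rightarrow> 'a" and P :: "nat set" and r :: "nat \<Rightarrow> nat"
    and D :: "nat \<Rightarrow> nat \<Rightarrow> 'a set"
  assumes tower: "expanding_young_tower M U P r D"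
begin

lemma T: "prob_space M \<and> U \<in> measurable M M \<and> distr M M U = M \<and> P \<noteq> {} \<and>
     (\<forall>p\<in>P. 0 < r p) \<and>
     (\<forall>p\<in>P. \<forall>k<r p. D k p \<in> sets M) \<and>
     (\<Union>p\<in>P. \<Union>k\<in>{..<r p}. D k p) = space M \<and>
     (\<forall>p\<in>P. \<forall>q\<in>P. \<forall>k<r p. \<forall>l<r q. (k, p) \<noteq> (l, q) \<longrightarrow> D k p \<inter> D l q = {}) \<and>
     (\<forall>p\<in>P. \<forall>k. Suc k < r p \<longrightarrow> meas_iso M U (D k p) (D (Suc k) p)) \<and>
     (\<forall>p\<in>P. meas_iso M U (D (r p - 1) p) (tower_level P r D 0))"
  using tower unfolding expanding_young_tower_def by (elim conjE) (intro conjI; assumption)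

lemma prob: "prob_space M" using T by (elim conjE)
lemma Umeas[measurable]: "U \<in> measurable M M" using T by (elim conjE)
lemma Udistr: "distr M M U = M" using T by (elim conjE)
lemma Dsets_all: "\<forall>p\<in>P. \<forall>k<r p. D k p \<in> sets M" using T by (elim conjE)
lemma Dsets: "p \<in> P \<Longrightarrow> k < r p \<Longrightarrow> D k p \<in> sets M" using Dsets_all by blast
lemma Dsub: "p \<in> P \<Longrightarrow> k < r p \<Longrightarrow> D k p \<subseteq> space M" using Dsets sets.sets_into_space by blast
lemma cover_all: "(\<Union>p\<in>P. \<Union>k\<in>{..<r p}. D k p) = space M" using T by (elim conjE)
lemma cover: "x \<in> space M \<Longrightarrow> \<exists>p\<in>P. \<exists>k<r p. x \<in> D k p"
  using cover_all by blast
lemma disj_all: "\<forall>p\<in>P. \<forall>q\<in>P. \<forall>k<r p. \<forall>l<r q. (k, p) \<noteq> (l, q) \<longrightarrow> D k p \<inter> D l q = {}"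
  using T by (elim conjE)
lemma disj: "p \<in> P \<Longrightarrow> q \<in> P \<Longrightarrow> k < r p \<Longrightarrow> l < r q \<Longrightarrow> x \<in> D k p \<Longrightarrow> x \<in> D l q \<Longrightarrow> k = l \<and> p = q"
proof (rule ccontr)
  assume a: "p \<in> P" "q \<in> P" "k < r p" "l < r q" "x \<in> D k p" "x \<in> D l q" "\<not> (k = l \<and> p = q)"
  then have "D k p \<inter> D l q = {}" using disj_all by blast
  then show False using a by blast
qed
lemma iso_step_all: "\<forall>p\<in>P. \<forall>k. Suc k < r p \<longrightarrow> meas_iso M U (D k p) (D (Suc k) p)" using T by (elim conjE)
lemma iso_step: "p \<in> P \<Longrightarrow> Suc k < r p \<Longrightarrow> meas_iso M U (D k p) (D (Suc k) p)"
  using iso_step_all by blast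
lemma iso_top_all: "\<forall>p\<in>P. meas_iso M U (D (r p - 1) p) (tower_level P r D 0)" using T by (elim conjE)
lemma iso_top: "p \<in> P \<Longrightarrow> meas_iso M U (D (r p - 1) p) (tower_level P r D 0)"
  using iso_top_all by blast

lemma inv_in: "bij_betw f A B \<Longrightarrow> y \<in> B \<Longrightarrow> the_inv_into A f y \<in> A"
  by (meson bij_betwE bij_betw_the_inv_into)
lemma inv_f: "bij_betw f A B \<Longrightarrow> y \<in> B \<Longrightarrow> f (the_inv_into A f y) = y"
  by (rule f_the_inv_into_f_bij_betw)

lemma step_bij: assumes "p \<in> P" "Suc k < r p" shows "bij_betw U (D k p) (D (Suc k) p)"
  using iso_step[OF assms] unfolding meas_iso_def by blast

lemma Ustep: "p \<in> P \<Longrightarrow> Suc k < r p \<Longrightarrow> x \<in> D k p \<Longrightarrow> U x \<in> D (Suc k) p"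
  using bij_betwE[OF step_bij[of p k]] by blast

lemma Utop: "p \<in> P \<Longrightarrow> x \<in> D (r p - 1) p \<Longrightarrow> U x \<in> tower_level P r D 0"
proof -
  assume a: "p \<in> P" "x \<in> D (r p - 1) p"
  have "bij_betw U (D (r p - 1) p) (tower_level P r D 0)"
    using iso_top[OF a(1)] unfolding meas_iso_def by (elim conjE)
  then show ?thesis using bij_betwE a(2) by blast
qed

lemma height_eq: "p \<in> P \<Longrightarrow> n < r p \<Longrightarrow> x \<in> D n p \<Longrightarrow> height P r D x = n"
  unfolding height_def
proof (rule the_equality)
  assume "p \<in> P" "n < r p" "x \<in> D n p"
  then show "\<exists>q\<in>P. n < r q \<and> x \<in> D n q" by blast
next
  fix m assume a: "p \<in> P" "n < r p" "x \<in> D n p" "\<exists>q\<in>P. m < r q \<and> x \<in> D m q"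
  then obtain q where "q \<in> P" "m < r q" "x \<in> D m q" by blast
  then show "m = n" using disj[of q p m n x] a by blast
qed

lemma iter_bij: "p \<in> P \<Longrightarrow> n < r p \<Longrightarrow> bij_betw (U^^n) (D 0 p) (D n p)"
proof (induction n)
  case 0 then show ?case by (simp add: bij_betw_def)
next
  case (Suc n)
  then have "bij_betw (U^^n) (D 0 p) (D n p)" by simp
  moreover have "bij_betw U (D n p) (D (Suc n) p)" using Suc step_bij by blast
  ultimately have "bij_betw (U \<circ> U^^n) (D 0 p) (D (Suc n) p)" using bij_betw_trans by blast
  then show ?case by (simp add: comp_def)
qed

lemma proj0_eq: assumes "p \<in> P" "n < r p" "x \<in> D n p"
  shows "proj0 U P r D x = the_inv_into (D 0 p) (U^^n) x"
proof -
  have b: "bij_betw (U^^n) (D 0 p) (D n p)" using iter_bij assms by blast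
  define y0 where "y0 = the_inv_into (D 0 p) (U^^n) x"
  have y0: "y0 \<in> D 0 p" "(U^^n) y0 = x" unfolding y0_def
    using inv_in[OF b assms(3)] inv_f[OF b assms(3)] by auto
  show ?thesis unfolding proj0_def y0_def[symmetric]
  proof (rule the_equality)
    show "\<exists>p\<in>P. \<exists>k<r p. y0 \<in> D 0 p \<and> (U ^^ k) y0 = x" using y0 assms by blast
  next
    fix y assume "\<exists>q\<in>P. \<exists>k<r q. y \<in> D 0 q \<and> (U ^^ k) y = x"
    then obtain q k where q: "q \<in> P" "k < r q" "y \<in> D 0 q" "(U^^k) y = x" by blast
    have "(U^^k) y \<in> D k q" using iter_bij[OF q(1,2)] q(3) bij_betwE by blast
    then have "k = n \<and> q = p" using disj q assms by blast
    moreover have "inj_on (U^^n) (D 0 p)" using b bij_betw_def by blast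
    ultimately show "y = y0" using y0 q inj_onD[of "U^^n" "D 0 p" y y0] by auto
  qed
qed

lemma proj0_props: assumes "p \<in> P" "n < r p" "x \<in> D n p"
  shows "proj0 U P r D x \<in> D 0 p" "(U^^n) (proj0 U P r D x) = x"
proof -
  have b: "bij_betw (U^^n) (D 0 p) (D n p)" using iter_bij assms by blast
  show "proj0 U P r D x \<in> D 0 p" "(U^^n) (proj0 U P r D x) = x"
    unfolding proj0_eq[OF assms]
    using inv_in[OF b assms(3)] inv_f[OF b assms(3)] by auto
qed


lemma inv_meas: assumes "p \<in> P" "n < r p"
  shows "the_inv_into (D 0 p) (U^^n) \<in> measurable (restrict_space M (D n p)) M"
  using assms(2)
proof (induction n)
  case 0
  have "the_inv_into (D 0 p) (U^^0) \<in> measurable (restrict_space M (D 0 p)) M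
    \<longleftrightarrow> (\<lambda>x. x) \<in> measurable (restrict_space M (D 0 p)) M"
    by (rule measurable_cong) (auto simp: space_restrict_space intro!: the_inv_into_f_eq)
  moreover have "(\<lambda>x. x) \<in> measurable (restrict_space M (D 0 p)) M"
    by (rule measurable_restrict_space1) simp
  ultimately show ?case by (simp add: id_def)
next
  case (Suc n)
  have b: "bij_betw (U^^n) (D 0 p) (D n p)" using iter_bij assms Suc by simp
  have bs: "bij_betw (U^^Suc n) (D 0 p) (D (Suc n) p)" using iter_bij assms Suc by blast
  have bU: "bij_betw U (D n p) (D (Suc n) p)" using step_bij assms Suc by blast
  have m1: "the_inv_into (D n p) U \<in> measurable (restrict_space M (D (Suc n) p)) (restrict_space M (D n p))"
    using iso_step[OF assms(1) Suc(2)] unfolding meas_iso_def by blast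
  have m2: "the_inv_into (D 0 p) (U^^n) \<in> measurable (restrict_space M (D n p)) M"
    using Suc by simp
  have eq: "the_inv_into (D 0 p) (U^^Suc n) x = the_inv_into (D 0 p) (U^^n) (the_inv_into (D n p) U x)"
    if x: "x \<in> D (Suc n) p" for x
  proof -
    define w where "w = the_inv_into (D n p) U x"
    have w: "w \<in> D n p" "U w = x" unfolding w_def using inv_in[OF bU x] inv_f[OF bU x] by auto
    define y where "y = the_inv_into (D 0 p) (U^^n) w"
    have y: "y \<in> D 0 p" "(U^^n) y = w" unfolding y_def using inv_in[OF b w(1)] inv_f[OF b w(1)] by auto
    have "(U^^Suc n) y = x" using y w by simp
    then have "the_inv_into (D 0 p) (U^^Suc n) x = y"
      using bs y by (intro the_inv_into_f_eq) (auto simp: bij_betw_def)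
    then show ?thesis unfolding y_def w_def .
  qed
  have "(\<lambda>x. the_inv_into (D 0 p) (U^^n) (the_inv_into (D n p) U x)) \<in> measurable (restrict_space M (D (Suc n) p)) M"
    using measurable_comp[OF m1 m2] by (simp add: comp_def)
  then show ?case
    by (rule measurable_cong[THEN iffD1, rotated]) (auto simp: space_restrict_space eq simp del: funpow.simps(2))
qed

definition "pieces = (\<lambda>(n,p). D n p) ` {(n,p). p \<in> P \<and> n < r p}"

lemma meas_hp:
  assumes F: "\<And>n. F n \<in> measurable M N"
  shows "(\<lambda>x. F (height P r D x) (proj0 U P r D x)) \<in> measurable M N"
proof (rule measurable_piecewise_restrict[where C = pieces])
  show "countable pieces" unfolding pieces_def by (intro countable_image) simp
  show "\<Omega> \<inter> space M \<in> sets M" if "\<Omega> \<in> pieces" for \<Omega>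
    using that Dsets unfolding pieces_def by auto
  show "space M \<subseteq> \<Union> pieces" using cover unfolding pieces_def by fastforce
  fix \<Omega> assume "\<Omega> \<in> pieces"
  then obtain n p where np: "p \<in> P" "n < r p" "\<Omega> = D n p" unfolding pieces_def by auto
  have "(\<lambda>x. F n (the_inv_into (D 0 p) (U^^n) x)) \<in> measurable (restrict_space M (D n p)) N"
    using measurable_comp[OF inv_meas[OF np(1,2)] F] by (simp add: comp_def)
  then show "(\<lambda>x. F (height P r D x) (proj0 U P r D x)) \<in> measurable (restrict_space M \<Omega>) N"
    unfolding np(3)
    by (rule measurable_cong[THEN iffD1, rotated]) (auto simp: space_restrict_space height_eq[OF np(1,2)] proj0_eq[OF np(1,2)])
qed

lemma pre_step: assumes "z \<in> space M" "U z \<in> D (Suc k) p" "p \<in> P" "Suc k < r p"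
  shows "z \<in> D k p"
proof -
  obtain q l where q: "q \<in> P" "l < r q" "z \<in> D l q" using cover assms(1) by blast
  show ?thesis
  proof (cases "Suc l < r q")
    case True
    then have "U z \<in> D (Suc l) q" using Ustep q by blast
    then have "Suc l = Suc k \<and> q = p" using disj[OF q(1) assms(3) True assms(4) _ assms(2)] by blast
    then show ?thesis using q by simp
  next
    case False
    then have "l = r q - 1" using q by simp
    then have "U z \<in> tower_level P r D 0" using Utop q by blast
    then obtain q' where q': "q' \<in> P" "0 < r q'" "U z \<in> D 0 q'" unfolding tower_level_def by blast
    then have "0 = Suc k" using disj[OF q'(1) assms(3) q'(2) assms(4) q'(3) assms(2)] by blast
    then show ?thesis by simp
  qed
qed

lemma Upow_space: "z \<in> space M \<Longrightarrow> (U^^m) z \<in> space M"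
  by (rule measurable_space[OF measurable_compose_n[OF Umeas]])

lemma pre_iter: assumes "z \<in> space M" "(U^^m) z \<in> D n p" "p \<in> P" "n < r p" "m \<le> n"
  shows "z \<in> D (n - m) p"
  using assms
proof (induction m arbitrary: z)
  case 0 then show ?case by simp
next
  case (Suc m)
  have "(U^^m) (U z) = (U^^Suc m) z" by (simp only: funpow_Suc_right comp_apply)
  then have "(U^^m) (U z) \<in> D n p" using Suc.prems(2) by simp
  moreover have "U z \<in> space M" using measurable_space[OF Umeas] Suc.prems(1) .
  ultimately have "U z \<in> D (n - m) p" using Suc.IH[of "U z"] Suc.prems(3-5) by simp
  moreover have "n - m = Suc (n - Suc m)" using Suc.prems by simp
  ultimately show ?case using pre_step[of z "n - Suc m" p] Suc.prems by (metis Suc_lessD Suc_mono order_le_less_trans diff_le_self)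
qed

lemma back_eq: assumes "z \<in> space M" "(U^^m) z \<in> D n p" "p \<in> P" "n < r p" "m \<le> n"
  shows "(U^^(n-m)) (proj0 U P r D ((U^^m) z)) = z"
proof -
  let ?x = "(U^^m) z"
  have z: "z \<in> D (n - m) p" using pre_iter assms by blast
  have b: "bij_betw (U^^n) (D 0 p) (D n p)" using iter_bij assms by blast
  have b2: "bij_betw (U^^(n-m)) (D 0 p) (D (n-m) p)" using iter_bij assms by simp
  define y1 where "y1 = the_inv_into (D 0 p) (U^^(n-m)) z"
  have y1: "y1 \<in> D 0 p" "(U^^(n-m)) y1 = z" unfolding y1_def using inv_in[OF b2 z] inv_f[OF b2 z] by auto
  have "(U^^n) y1 = ?x"
  proof -
    have "(U^^n) y1 = (U^^(m + (n-m))) y1" using assms by simp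
    also have "\<dots> = ?x" by (simp add: funpow_add y1)
    finally show ?thesis .
  qed
  moreover have "proj0 U P r D ?x \<in> D 0 p" "(U^^n) (proj0 U P r D ?x) = ?x"
    using proj0_props assms by blast+
  moreover have "inj_on (U^^n) (D 0 p)" using b bij_betw_def by blast
  ultimately have "proj0 U P r D ?x = y1" using y1 inj_onD[of "U^^n" "D 0 p" "proj0 U P r D ?x" y1] by auto
  then show ?thesis using y1 by simp
qed

lemma distr_pow: "distr M M (U^^m) = M"
proof (induction m)
  case 0 then show ?case by (simp add: distr_id2)
next
  case (Suc m)
  have "distr M M (U^^Suc m) = distr M M (U \<circ> U^^m)" by simp
  also have "\<dots> = distr (distr M M (U^^m)) M U"
    by (rule distr_distr[symmetric]) (auto intro: measurable_compose_n)
  also have "\<dots> = M" using Suc Udistr by simp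
  finally show ?case .
qed

lemma transfer:
  assumes phi[measurable]: "\<phi> \<in> borel_measurable M" and jn: "j \<le> n"
  shows "(\<integral>\<^sup>+x. (if height P r D x = n then \<phi> ((U^^j) (proj0 U P r D x)) else 0) \<partial>M) \<le> (\<integral>\<^sup>+x. \<phi> x \<partial>M)"
proof -
  define F where "F = (\<lambda>k y. if k = n then \<phi> ((U^^j) y) else (0::ennreal))"
  have Fm: "F k \<in> borel_measurable M" for k
    unfolding F_def using measurable_compose_n[OF Umeas] by (cases "k = n") auto
  let ?f = "\<lambda>x. F (height P r D x) (proj0 U P r D x)"
  have fm: "?f \<in> borel_measurable M" by (rule meas_hp[OF Fm])
  have "(\<integral>\<^sup>+x. ?f x \<partial>M) = (\<integral>\<^sup>+x. ?f x \<partial>(distr M M (U^^(n-j))))" by (simp add: distr_pow)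
  also have "\<dots> = (\<integral>\<^sup>+x. ?f ((U^^(n-j)) x) \<partial>M)"
    by (rule nn_integral_distr[OF measurable_compose_n[OF Umeas]]) (simp add: fm)
  also have "\<dots> \<le> (\<integral>\<^sup>+x. \<phi> x \<partial>M)"
  proof (rule nn_integral_mono)
    fix z assume z: "z \<in> space M"
    show "?f ((U^^(n-j)) z) \<le> \<phi> z"
    proof (cases "height P r D ((U^^(n-j)) z) = n")
      case True
      obtain q k where q: "q \<in> P" "k < r q" "(U^^(n-j)) z \<in> D k q" using cover Upow_space[OF z] by blast
      have "k = n" using height_eq[OF q] True by simp
      then have "(U^^(n-(n-j))) (proj0 U P r D ((U^^(n-j)) z)) = z"
        using back_eq[OF z, of "n-j" n q] q by simp
      then show ?thesis using True jn unfolding F_def by simp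
    next
      case False then show ?thesis unfolding F_def by simp
    qed
  qed
  finally show ?thesis unfolding F_def .
qed

end
lemma summable_n_pow:
  fixes s :: real assumes s: "0 \<le> s" "s < 1"
  shows "summable (\<lambda>n. real n * s^n)"
proof (cases "s = 0")
  case True
  then have "(\<lambda>n. real n * s^n) = (\<lambda>n. 0)" by (auto simp: fun_eq_iff power_0_left)
  then show ?thesis by simp
next
  case False
  define w where "w = sqrt s"
  have w: "0 < w" "w < 1" "w * w = s" using s False unfolding w_def
    by (auto simp: real_sqrt_lt_1_iff)
  define b where "b = 1 / w"
  have b: "1 < b" "b * s = w" using w unfolding b_def by (auto simp: field_simps)
  have "summable (\<lambda>n. w^n / (b - 1))"
    using w by (intro summable_divide summable_geometric) simp
  moreover have "norm (real n * s^n) \<le> w^n / (b - 1)" for n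
  proof -
    have "1 + real n * (b - 1) \<le> (1 + (b - 1))^n"
      by (rule Bernoulli_inequality) (use b in simp)
    then have "real n * (b - 1) \<le> b^n" by simp
    then have "real n \<le> b^n / (b - 1)" using b by (simp add: field_simps)
    then have "real n * s^n \<le> b^n / (b - 1) * s^n" using s by (intro mult_right_mono) auto
    also have "\<dots> = (b * s)^n / (b - 1)" by (simp add: power_mult_distrib)
    also have "\<dots> = w^n / (b - 1)" using b by simp
    finally show ?thesis using s by simp
  qed
  ultimately show ?thesis by (rule summable_comparison_test') 
qed

lemma real_ineq:
  fixes a \<mu> :: real assumes "0 < \<mu>" "0 \<le> a"
  shows "a \<le> \<mu>^2 + a powr (3/2) / \<mu>"
proof (cases "a \<le> \<mu>^2")
  case True
  moreover have "0 \<le> a powr (3/2) / \<mu>" using assms by simp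
  ultimately show ?thesis by linarith
next
  case False
  have a0: "0 < a" using False assms by (smt (verit) zero_le_power2)
  have a1: "\<mu> < sqrt a" using False by (intro real_less_rsqrt) simp
  note a = a0 a1
  have "a powr (3/2) = a powr (1 + 1/2)" by simp
  also have "\<dots> = a * sqrt a" using a by (subst powr_add) (simp add: powr_half_sqrt)
  finally have e: "a powr (3/2) = a * sqrt a" .
  have "a = a * \<mu> / \<mu>" using assms by simp
  also have "\<dots> \<le> a * sqrt a / \<mu>" using a assms by (intro divide_right_mono mult_left_mono) auto
  finally show ?thesis unfolding e using assms by (smt (verit) zero_le_power2)
qed

context twr
begin

abbreviation "hgt \<equiv> height P r D"
abbreviation "pj \<equiv> proj0 U P r D"

lemma hgt_meas[measurable]: "hgt \<in> measurable M (count_space UNIV)"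
  using meas_hp[of "\<lambda>n y. n" "count_space UNIV"] by simp

lemma lvl_eq: "{x \<in> space M. hgt x = n} = tower_level P r D n"
proof
  show "{x \<in> space M. hgt x = n} \<subseteq> tower_level P r D n"
  proof
    fix x assume x: "x \<in> {x \<in> space M. hgt x = n}"
    then obtain q k where q: "q \<in> P" "k < r q" "x \<in> D k q" using cover by blast
    then have "k = n" using height_eq[OF q] x by simp
    then show "x \<in> tower_level P r D n" using q unfolding tower_level_def by blast
  qed
  show "tower_level P r D n \<subseteq> {x \<in> space M. hgt x = n}"
  proof
    fix x assume "x \<in> tower_level P r D n"
    then obtain q where q: "q \<in> P" "n < r q" "x \<in> D n q" unfolding tower_level_def by blast
    then show "x \<in> {x \<in> space M. hgt x = n}" using height_eq[OF q] Dsub[OF q(1,2)] by blast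
  qed
qed

lemma lvl_sets: "tower_level P r D n \<in> sets M"
proof -
  have "{x \<in> space M. hgt x = n} \<in> sets M" by measurable
  then show ?thesis using lvl_eq by simp
qed

lemma pj_space: assumes "x \<in> space M" shows "(U^^j) (pj x) \<in> space M"
proof -
  obtain q k where q: "q \<in> P" "k < r q" "x \<in> D k q" using cover assms by blast
  then have "pj x \<in> D 0 q" using proj0_props by blast
  then have "pj x \<in> space M" using Dsub[of q 0] q by auto
  then show ?thesis by (rule Upow_space)
qed

lemma gj_meas: "g \<in> borel_measurable M \<Longrightarrow> (\<lambda>y. g ((U^^j) y)) \<in> borel_measurable M"
  using measurable_comp[OF measurable_compose_n[OF Umeas]] by (simp add: comp_def)

lemma meas_lvl:
  assumes "h \<in> borel_measurable M"
  shows "(\<lambda>x. if hgt x = n then h (pj x) else (0::ennreal)) \<in> borel_measurable M"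
proof -
  have "(\<lambda>y. if k = n then h y else (0::ennreal)) \<in> borel_measurable M" for k
    using assms by (cases "k = n") auto
  then show ?thesis using meas_hp[of "\<lambda>k y. if k = n then h y else (0::ennreal)"] by simp
qed

lemma level_bound:
  assumes gm[measurable]: "g \<in> borel_measurable M" and jn: "j \<le> n" and mu: "0 < \<mu>"
    and em: "emeasure M (tower_level P r D n) \<le> ennreal m"
    and K: "(\<integral>\<^sup>+x. ennreal (\<bar>g x\<bar> powr (3/2)) \<partial>M) \<le> ennreal k"
    and mk: "0 \<le> m" "0 \<le> k"
  shows "(\<integral>\<^sup>+x. (if hgt x = n then ennreal \<bar>g ((U^^j) (pj x))\<bar> else 0) \<partial>M) \<le> ennreal (\<mu>^2 * m + k / \<mu>)"
proof -
  let ?A = "tower_level P r D n"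
  have gj[measurable]: "(\<lambda>y. g ((U^^j) y)) \<in> borel_measurable M" using gj_meas[OF gm] .
  define f where "f x = (if hgt x = n then ennreal (\<bar>g ((U^^j) (pj x))\<bar> powr (3/2)) else 0)" for x
  have fm: "f \<in> borel_measurable M" unfolding f_def
    by (rule meas_lvl[of "\<lambda>y. ennreal (\<bar>g ((U^^j) y)\<bar> powr (3/2))"]) measurable
  have A[measurable]: "?A \<in> sets M" by (rule lvl_sets)
  have "(\<integral>\<^sup>+x. (if hgt x = n then ennreal \<bar>g ((U^^j) (pj x))\<bar> else 0) \<partial>M)
      \<le> (\<integral>\<^sup>+x. ennreal (\<mu>^2) * indicator ?A x + ennreal (1/\<mu>) * f x \<partial>M)"
  proof (rule nn_integral_mono)
    fix x assume x: "x \<in> space M"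
    show "(if hgt x = n then ennreal \<bar>g ((U^^j) (pj x))\<bar> else 0) \<le> ennreal (\<mu>^2) * indicator ?A x + ennreal (1/\<mu>) * f x"
    proof (cases "hgt x = n")
      case True
      then have "x \<in> ?A" using lvl_eq x by blast
      let ?a = "\<bar>g ((U^^j) (pj x))\<bar>"
      have "ennreal ?a \<le> ennreal (\<mu>^2 + (1/\<mu>) * ?a powr (3/2))"
        using real_ineq[OF mu, of ?a] by (intro ennreal_leI) simp
      also have "\<dots> = ennreal (\<mu>^2) + ennreal (1/\<mu>) * ennreal (?a powr (3/2))"
        using mu by (subst ennreal_plus, simp, simp, subst ennreal_mult, auto)
      finally show ?thesis using True \<open>x \<in> ?A\<close> unfolding f_def by simp
    qed simp
  qed
  also have "\<dots> = ennreal (\<mu>^2) * emeasure M ?A + ennreal (1/\<mu>) * (\<integral>\<^sup>+x. f x \<partial>M)"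
    using fm by (simp add: nn_integral_add nn_integral_cmult nn_integral_cmult_indicator)
  also have "\<dots> \<le> ennreal (\<mu>^2) * ennreal m + ennreal (1/\<mu>) * ennreal k"
  proof (intro add_mono mult_left_mono)
    show "emeasure M ?A \<le> ennreal m" by (rule em)
    have "(\<integral>\<^sup>+x. f x \<partial>M) \<le> (\<integral>\<^sup>+x. ennreal (\<bar>g x\<bar> powr (3/2)) \<partial>M)"
      unfolding f_def by (rule transfer[OF _ jn, of "\<lambda>x. ennreal (\<bar>g x\<bar> powr (3/2))", simplified]) measurable
    then show "(\<integral>\<^sup>+x. f x \<partial>M) \<le> ennreal k" using K by (rule order.trans)
  qed auto
  also have "\<dots> = ennreal (\<mu>^2 * m + k / \<mu>)"
  proof -
    have e1: "ennreal (\<mu>^2 * m) = ennreal (\<mu>^2) * ennreal m" using mk by (simp add: ennreal_mult)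
    have "ennreal (k / \<mu>) = ennreal ((1/\<mu>) * k)" by simp
    also have "\<dots> = ennreal (1/\<mu>) * ennreal k" using mk mu by (intro ennreal_mult) auto
    finally have e2: "ennreal (k / \<mu>) = ennreal (1/\<mu>) * ennreal k" .
    have "ennreal (\<mu>^2 * m + k / \<mu>) = ennreal (\<mu>^2 * m) + ennreal (k / \<mu>)"
      using mk mu by (intro ennreal_plus) auto
    then show ?thesis using e1 e2 by simp
  qed
  finally show ?thesis .
qed

end
lemma iexp_lip: "norm (exp (\<i> * complex_of_real a) - exp (\<i> * complex_of_real b)) \<le> \<bar>a - b\<bar>"
proof -
  have e: "exp (\<i> * complex_of_real a) - exp (\<i> * complex_of_real b)
        = exp (\<i> * complex_of_real b) * (exp (\<i> * complex_of_real (a - b)) - 1)"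
    by (simp add: algebra_simps exp_add[symmetric])
  have "norm (exp (\<i> * complex_of_real (a - b)) - 1) \<le> \<bar>a - b\<bar>"
    using iexp_approx1[of "a - b" 0] by simp
  then show ?thesis unfolding e by (simp add: norm_mult)
qed

lemma iexp_one: "norm (exp (\<i> * complex_of_real a) - 1) \<le> \<bar>a\<bar>"
  using iexp_lip[of a 0] by simp

context twr
begin

lemma sum_finite:
  assumes gm[measurable]: "g \<in> borel_measurable M" and gL: "integrable M (\<lambda>x. \<bar>g x\<bar> powr (3/2))"
    and tail: "exp_small_tail M P r D" and \<sigma>: "\<And>n j. j < n \<Longrightarrow> \<sigma> n j \<le> n"
  shows "(\<integral>\<^sup>+x. ennreal (\<Sum>j<hgt x. \<bar>g ((U^^(\<sigma> (hgt x) j)) (pj x))\<bar>) \<partial>M) < \<infinity>"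
proof -
  obtain C \<rho> where \<rho>: "0 < \<rho>" "\<rho> < 1" "\<And>n. measure M (tower_level P r D n) \<le> C * \<rho>^n"
    using tail unfolding exp_small_tail_def by blast
  define k where "k = (\<integral>x. \<bar>g x\<bar> powr (3/2) \<partial>M)"
  have k0: "0 \<le> k" unfolding k_def by (intro integral_nonneg_AE) auto
  have K: "(\<integral>\<^sup>+x. ennreal (\<bar>g x\<bar> powr (3/2)) \<partial>M) = ennreal k"
    unfolding k_def by (rule nn_integral_eq_integral[OF gL]) auto
  interpret prob_space M by (rule prob)
  have em: "emeasure M (tower_level P r D n) \<le> ennreal (\<bar>C\<bar> * \<rho>^n)" for n
  proof -
    have "emeasure M (tower_level P r D n) = ennreal (measure M (tower_level P r D n))"
      by (simp add: emeasure_eq_measure)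
    also have "\<dots> \<le> ennreal (\<bar>C\<bar> * \<rho>^n)"
    proof (rule ennreal_leI)
      have "C * \<rho>^n \<le> \<bar>C\<bar> * \<rho>^n" using \<rho>(1) by (intro mult_right_mono) auto
      then show "measure M (tower_level P r D n) \<le> \<bar>C\<bar> * \<rho>^n" using \<rho>(3)[of n] by linarith
    qed
    finally show ?thesis .
  qed
  define s where "s = sqrt (sqrt \<rho>)"
  have s: "0 < s" "s < 1" using \<rho> unfolding s_def by (auto simp: real_sqrt_lt_1_iff)
  have s4: "\<rho> = s^4"
  proof -
    have "s^4 = (s^2)^2" by (simp flip: power_mult)
    also have "s^2 = sqrt \<rho>" unfolding s_def using \<rho> by simp
    finally show ?thesis using \<rho> by simp
  qed
  define c where "c = \<bar>C\<bar> + k"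
  have c0: "0 \<le> c" unfolding c_def using k0 by simp
  have trm: "(\<integral>\<^sup>+x. (if hgt x = n then ennreal \<bar>g ((U^^i) (pj x))\<bar> else 0) \<partial>M) \<le> ennreal (c * s^n)"
    if "i \<le> n" for n i
  proof -
    have sn: "0 < s^n" "s^n \<le> 1" using s by (auto simp: power_le_one)
    have "(\<integral>\<^sup>+x. (if hgt x = n then ennreal \<bar>g ((U^^i) (pj x))\<bar> else 0) \<partial>M)
        \<le> ennreal ((1/s^n)^2 * (\<bar>C\<bar> * \<rho>^n) + k / (1/s^n))"
      by (rule level_bound[OF gm that]) (use sn em K k0 \<rho>(1) in auto)
    also have "\<dots> \<le> ennreal (c * s^n)"
    proof (rule ennreal_leI)
      have "\<rho>^n = (s^n)^4" unfolding s4 by (simp flip: power_mult add: mult.commute)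
      then have e1: "(1/s^n)^2 * (\<bar>C\<bar> * \<rho>^n) = \<bar>C\<bar> * (s^n)^2" using sn
        by (simp add: field_simps power2_eq_square eval_nat_numeral)
      have "(s^n)^2 \<le> s^n" using sn by (simp add: power2_eq_square mult_le_cancel_right1)
      then have "\<bar>C\<bar> * (s^n)^2 \<le> \<bar>C\<bar> * s^n" by (intro mult_left_mono) auto
      moreover have "k / (1/s^n) = k * s^n" by simp
      ultimately show "(1/s^n)^2 * (\<bar>C\<bar> * \<rho>^n) + k / (1/s^n) \<le> c * s^n"
        unfolding e1 c_def by (simp add: algebra_simps)
    qed
    finally show ?thesis .
  qed
  have summ: "\<And>n i. (\<lambda>y. ennreal \<bar>g ((U^^i) y)\<bar>) \<in> borel_measurable M"
    using gj_meas[OF gm] by measurable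
  define \<Phi> where "\<Phi> n x = (if hgt x = n then ennreal (\<Sum>j<n. \<bar>g ((U^^(\<sigma> n j)) (pj x))\<bar>) else 0)" for n x
  have \<Phi>m: "\<Phi> n \<in> borel_measurable M" for n
  proof -
    have "(\<lambda>y. \<Sum>j<n. \<bar>g ((U^^(\<sigma> n j)) y)\<bar>) \<in> borel_measurable M"
      by (intro borel_measurable_sum borel_measurable_abs gj_meas[OF gm])
    then have "(\<lambda>y. ennreal (\<Sum>j<n. \<bar>g ((U^^(\<sigma> n j)) y)\<bar>)) \<in> borel_measurable M" by measurable
    then show ?thesis unfolding \<Phi>_def[abs_def] by (rule meas_lvl)
  qed
  have \<Phi>_bound: "(\<integral>\<^sup>+x. \<Phi> n x \<partial>M) \<le> ennreal (real n * (c * s^n))" for n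
  proof -
    have "(\<integral>\<^sup>+x. \<Phi> n x \<partial>M) = (\<integral>\<^sup>+x. (\<Sum>j<n. (if hgt x = n then ennreal \<bar>g ((U^^(\<sigma> n j)) (pj x))\<bar> else 0)) \<partial>M)"
      by (intro nn_integral_cong) (auto simp: \<Phi>_def)
    also have "\<dots> = (\<Sum>j<n. \<integral>\<^sup>+x. (if hgt x = n then ennreal \<bar>g ((U^^(\<sigma> n j)) (pj x))\<bar> else 0) \<partial>M)"
      by (rule nn_integral_sum) (rule meas_lvl[OF summ])
    also have "\<dots> \<le> (\<Sum>j<n. ennreal (c * s^n))"
      by (intro sum_mono trm) (use \<sigma> in auto)
    also have "\<dots> = ennreal (\<Sum>j<n. c * s^n)" using c0 s by (intro sum_ennreal) auto
    also have "\<dots> = ennreal (real n * (c * s^n))" by simp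
    finally show ?thesis .
  qed
  have "(\<integral>\<^sup>+x. ennreal (\<Sum>j<hgt x. \<bar>g ((U^^(\<sigma> (hgt x) j)) (pj x))\<bar>) \<partial>M) = (\<integral>\<^sup>+x. (\<Sum>n. \<Phi> n x) \<partial>M)"
  proof (intro nn_integral_cong)
    fix x show "ennreal (\<Sum>j<hgt x. \<bar>g ((U^^(\<sigma> (hgt x) j)) (pj x))\<bar>) = (\<Sum>n. \<Phi> n x)"
      by (subst suminf_finite[of "{hgt x}"]) (auto simp: \<Phi>_def)
  qed
  also have "\<dots> = (\<Sum>n. \<integral>\<^sup>+x. \<Phi> n x \<partial>M)" by (rule nn_integral_suminf[OF \<Phi>m])
  also have "\<dots> \<le> (\<Sum>n. ennreal (real n * (c * s^n)))" by (intro suminf_le \<Phi>_bound summableI)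
  also have "\<dots> < \<infinity>"
  proof -
    have "summable (\<lambda>n. c * (real n * s^n))" using summable_n_pow[of s] s by (intro summable_mult) auto
    moreover have "(\<lambda>n. c * (real n * s^n)) = (\<lambda>n. real n * (c * s^n))" by (simp add: fun_eq_iff mult.left_commute)
    ultimately have sm: "summable (\<lambda>n. real n * (c * s^n))" by simp
    have "(\<Sum>n. ennreal (real n * (c * s^n))) \<noteq> \<top>"
      by (rule ennreal_suminf_neq_top[OF sm]) (use c0 s in auto)
    then show ?thesis by (simp add: less_top)
  qed
  finally show ?thesis .
qed

end
theorem mainTheorem13:
  fixes M :: "'a measure" and U :: "'a \<Rightarrow> 'a" and P :: "nat set" and r :: "nat \<Rightarrow> nat"
    and D :: "nat \<Rightarrow> nat \<Rightarrow> 'a set" and g g' :: "'a \<Rightarrow> real"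
  assumes tower: "expanding_young_tower M U P r D"
    and tail: "exp_small_tail M P r D"
    and g_meas: "g \<in> borel_measurable M" and g'_meas: "g' \<in> borel_measurable M"
    and g_Lp: "\<And>p::real. 1 \<le> p \<Longrightarrow> p < 2 \<Longrightarrow> integrable M (\<lambda>x. \<bar>g x\<bar> powr p)"
    and g'_Lp: "\<And>p::real. 1 \<le> p \<Longrightarrow> p < 2 \<Longrightarrow> integrable M (\<lambda>x. \<bar>g' x\<bar> powr p)"
    and bdd: "\<exists>B. \<forall>x\<in>space M. \<bar>g x - g' x\<bar> \<le> B"
  shows "(\<lambda>t::real.
            (\<integral>x. complex_of_real (g x) * (exp (\<i> * complex_of_real (t * tower_sum U P r D g x)) - 1) \<partial>M)
          - (\<integral>x. complex_of_real (g' x) * (exp (\<i> * complex_of_real (t * tower_sum U P r D g' x)) - 1) \<partial>M))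
         \<in> O[at 0](\<lambda>t. complex_of_real t)"
proof -
  interpret twr M U P r D by (rule twr.intro[OF tower])
  interpret prob_space M by (rule prob)
  note [measurable] = g_meas g'_meas
  obtain B where B: "\<forall>x\<in>space M. \<bar>g x - g' x\<bar> \<le> B" using bdd by blast
  define B0 where "B0 = max B 0"
  have B0: "0 \<le> B0" "\<And>x. x \<in> space M \<Longrightarrow> \<bar>g x - g' x\<bar> \<le> B0" using B unfolding B0_def by auto
  have gi: "integrable M g"
    using g_Lp[of 1] integrable_abs_iff[OF g_meas] by simp
  have g'i: "integrable M g'"
    using g'_Lp[of 1] integrable_abs_iff[OF g'_meas] by simp
  have TSm: "(\<lambda>x. tower_sum U P r D h x) \<in> borel_measurable M" if hm: "h \<in> borel_measurable M" for h
  proof -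
    have "(\<lambda>x. (\<lambda>n y. \<Sum>k<n. h ((U^^k) y)) (hgt x) (pj x)) \<in> borel_measurable M"
      by (rule meas_hp) (intro borel_measurable_sum gj_meas[OF hm])
    then show ?thesis by (simp add: tower_sum_def)
  qed
  note Gm[measurable] = TSm[OF g_meas] TSm[OF g'_meas]
  have hr[measurable]: "(\<lambda>x. real (hgt x)) \<in> borel_measurable M"
    using meas_hp[of "\<lambda>n y. real n" borel] by simp
  have Gi: "integrable M (\<lambda>x. tower_sum U P r D g x)"
  proof (rule integrableI_bounded)
    show "(\<lambda>x. tower_sum U P r D g x) \<in> borel_measurable M" by measurable
    have "(\<integral>\<^sup>+x. ennreal (norm (tower_sum U P r D g x)) \<partial>M)
        \<le> (\<integral>\<^sup>+x. ennreal (\<Sum>j<hgt x. \<bar>g ((U^^((\<lambda>n j. j) (hgt x) j)) (pj x))\<bar>) \<partial>M)"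
      by (intro nn_integral_mono ennreal_leI) (simp add: tower_sum_def sum_abs)
    also have "\<dots> < \<infinity>"
      by (rule sum_finite[OF g_meas g_Lp tail]) auto
    finally show "(\<integral>\<^sup>+x. ennreal (norm (tower_sum U P r D g x)) \<partial>M) < \<infinity>" .
  qed
  have Wi: "integrable M (\<lambda>x. real (hgt x) * \<bar>g' x\<bar>)"
  proof (rule integrableI_bounded)
    show "(\<lambda>x. real (hgt x) * \<bar>g' x\<bar>) \<in> borel_measurable M" by measurable
    have "(\<integral>\<^sup>+x. ennreal (norm (real (hgt x) * \<bar>g' x\<bar>)) \<partial>M)
        = (\<integral>\<^sup>+x. ennreal (\<Sum>j<hgt x. \<bar>g' ((U^^((\<lambda>n j. n) (hgt x) j)) (pj x))\<bar>) \<partial>M)"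
    proof (intro nn_integral_cong)
      fix x assume x: "x \<in> space M"
      then obtain q k where q: "q \<in> P" "k < r q" "x \<in> D k q" using cover by blast
      have "(U^^(hgt x)) (pj x) = x" using proj0_props(2)[OF q] height_eq[OF q] by simp
      then show "ennreal (norm (real (hgt x) * \<bar>g' x\<bar>)) = ennreal (\<Sum>j<hgt x. \<bar>g' ((U^^((\<lambda>n j. n) (hgt x) j)) (pj x))\<bar>)"
        by simp
    qed
    also have "\<dots> < \<infinity>"
      by (rule sum_finite[OF g'_meas g'_Lp tail]) auto
    finally show "(\<integral>\<^sup>+x. ennreal (norm (real (hgt x) * \<bar>g' x\<bar>)) \<partial>M) < \<infinity>" .
  qed
  have diffG: "\<bar>tower_sum U P r D g x - tower_sum U P r D g' x\<bar> \<le> real (hgt x) * B0" if x: "x \<in> space M" for x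
  proof -
    have "\<bar>tower_sum U P r D g x - tower_sum U P r D g' x\<bar> = \<bar>\<Sum>k<hgt x. g ((U^^k) (pj x)) - g' ((U^^k) (pj x))\<bar>"
      by (simp add: tower_sum_def sum_subtractf)
    also have "\<dots> \<le> (\<Sum>k<hgt x. \<bar>g ((U^^k) (pj x)) - g' ((U^^k) (pj x))\<bar>)" by (rule sum_abs)
    also have "\<dots> \<le> (\<Sum>k<hgt x. B0)" by (intro sum_mono B0(2) pj_space x)
    also have "\<dots> = real (hgt x) * B0" by simp
    finally show ?thesis .
  qed
  define K where "K = (\<integral>x. B0 * \<bar>tower_sum U P r D g x\<bar> + B0 * (real (hgt x) * \<bar>g' x\<bar>) \<partial>M)"
  have Ki: "integrable M (\<lambda>x. B0 * \<bar>tower_sum U P r D g x\<bar> + B0 * (real (hgt x) * \<bar>g' x\<bar>))"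
  proof (rule Bochner_Integration.integrable_add)
    show "integrable M (\<lambda>x. B0 * \<bar>tower_sum U P r D g x\<bar>)"
      using integrable_abs[OF Gi] by (rule integrable_mult_right)
    show "integrable M (\<lambda>x. B0 * (real (hgt x) * \<bar>g' x\<bar>))"
      using Wi by (rule integrable_mult_right)
  qed
  have bound: "norm ((\<integral>x. complex_of_real (g x) * (exp (\<i> * complex_of_real (t * tower_sum U P r D g x)) - 1) \<partial>M)
          - (\<integral>x. complex_of_real (g' x) * (exp (\<i> * complex_of_real (t * tower_sum U P r D g' x)) - 1) \<partial>M))
       \<le> K * norm (complex_of_real t)" for t
  proof -
    define E1 where "E1 x = exp (\<i> * complex_of_real (t * tower_sum U P r D g x))" for x
    define E2 where "E2 x = exp (\<i> * complex_of_real (t * tower_sum U P r D g' x))" for x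
    have E1m[measurable]: "E1 \<in> borel_measurable M" unfolding E1_def[abs_def] by measurable
    have E2m[measurable]: "E2 \<in> borel_measurable M" unfolding E2_def[abs_def] by measurable
    have f1i: "integrable M (\<lambda>x. complex_of_real (g x) * (E1 x - 1))"
    proof (rule Bochner_Integration.integrable_bound)
      show "integrable M (\<lambda>x. 2 * \<bar>g x\<bar>)" using gi by auto
      show "(\<lambda>x. complex_of_real (g x) * (E1 x - 1)) \<in> borel_measurable M" by measurable
      have "norm (E1 x - 1) \<le> 2" for x
        using norm_triangle_ineq4[of "E1 x" 1] unfolding E1_def by simp
      then have "\<bar>g x\<bar> * norm (E1 x - 1) \<le> \<bar>g x\<bar> * 2" for x by (intro mult_left_mono) auto
      then show "AE x in M. norm (complex_of_real (g x) * (E1 x - 1)) \<le> norm (2 * \<bar>g x\<bar>)"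
        by (intro AE_I2) (simp add: norm_mult mult.commute)
    qed
    have f2i: "integrable M (\<lambda>x. complex_of_real (g' x) * (E2 x - 1))"
    proof (rule Bochner_Integration.integrable_bound)
      show "integrable M (\<lambda>x. 2 * \<bar>g' x\<bar>)" using g'i by auto
      show "(\<lambda>x. complex_of_real (g' x) * (E2 x - 1)) \<in> borel_measurable M" by measurable
      have "norm (E2 x - 1) \<le> 2" for x
        using norm_triangle_ineq4[of "E2 x" 1] unfolding E2_def by simp
      then have "\<bar>g' x\<bar> * norm (E2 x - 1) \<le> \<bar>g' x\<bar> * 2" for x by (intro mult_left_mono) auto
      then show "AE x in M. norm (complex_of_real (g' x) * (E2 x - 1)) \<le> norm (2 * \<bar>g' x\<bar>)"
        by (intro AE_I2) (simp add: norm_mult mult.commute)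
    qed
    have "norm ((\<integral>x. complex_of_real (g x) * (E1 x - 1) \<partial>M) - (\<integral>x. complex_of_real (g' x) * (E2 x - 1) \<partial>M))
        = norm (\<integral>x. complex_of_real (g x) * (E1 x - 1) - complex_of_real (g' x) * (E2 x - 1) \<partial>M)"
      using f1i f2i by simp
    also have "\<dots> \<le> (\<integral>x. norm (complex_of_real (g x) * (E1 x - 1) - complex_of_real (g' x) * (E2 x - 1)) \<partial>M)"
      by (rule integral_norm_bound)
    also have "\<dots> \<le> (\<integral>x. \<bar>t\<bar> * (B0 * \<bar>tower_sum U P r D g x\<bar> + B0 * (real (hgt x) * \<bar>g' x\<bar>)) \<partial>M)"
    proof (rule integral_mono)
      show "integrable M (\<lambda>x. norm (complex_of_real (g x) * (E1 x - 1) - complex_of_real (g' x) * (E2 x - 1)))"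
        using f1i f2i by (intro integrable_norm) simp
      show "integrable M (\<lambda>x. \<bar>t\<bar> * (B0 * \<bar>tower_sum U P r D g x\<bar> + B0 * (real (hgt x) * \<bar>g' x\<bar>)))"
        using Ki by simp
      fix x assume x: "x \<in> space M"
      let ?G = "tower_sum U P r D g x" and ?G' = "tower_sum U P r D g' x"
      have eq: "complex_of_real (g x) * (E1 x - 1) - complex_of_real (g' x) * (E2 x - 1)
          = complex_of_real (g x - g' x) * (E1 x - 1) + complex_of_real (g' x) * (E1 x - E2 x)"
        by (simp add: algebra_simps)
      have n1: "norm (complex_of_real (g x - g' x) * (E1 x - 1)) \<le> B0 * (\<bar>t\<bar> * \<bar>?G\<bar>)"
      proof -
        have "norm (E1 x - 1) \<le> \<bar>t * ?G\<bar>" unfolding E1_def by (rule iexp_one)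
        then have e: "norm (E1 x - 1) \<le> \<bar>t\<bar> * \<bar>?G\<bar>" by (simp add: abs_mult)
        have "norm (complex_of_real (g x - g' x) * (E1 x - 1)) = \<bar>g x - g' x\<bar> * norm (E1 x - 1)"
          by (simp only: norm_mult norm_of_real)
        also have "\<dots> \<le> B0 * (\<bar>t\<bar> * \<bar>?G\<bar>)"
          using B0(2)[OF x] B0(1) e by (intro mult_mono) auto
        finally show ?thesis .
      qed
      have n2: "norm (complex_of_real (g' x) * (E1 x - E2 x)) \<le> \<bar>g' x\<bar> * (\<bar>t\<bar> * (real (hgt x) * B0))"
      proof -
        have "norm (E1 x - E2 x) \<le> \<bar>t * ?G - t * ?G'\<bar>" unfolding E1_def E2_def by (rule iexp_lip)
        also have "\<dots> = \<bar>t\<bar> * \<bar>?G - ?G'\<bar>" by (simp add: abs_mult right_diff_distrib[symmetric])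
        also have "\<dots> \<le> \<bar>t\<bar> * (real (hgt x) * B0)" using diffG[OF x] by (intro mult_left_mono) auto
        finally show ?thesis by (simp add: norm_mult mult_left_mono)
      qed
      have "norm (complex_of_real (g x) * (E1 x - 1) - complex_of_real (g' x) * (E2 x - 1))
          \<le> B0 * (\<bar>t\<bar> * \<bar>?G\<bar>) + \<bar>g' x\<bar> * (\<bar>t\<bar> * (real (hgt x) * B0))"
        unfolding eq using n1 n2 norm_triangle_ineq[of "complex_of_real (g x - g' x) * (E1 x - 1)" "complex_of_real (g' x) * (E1 x - E2 x)"]
        by linarith
      also have "\<dots> = \<bar>t\<bar> * (B0 * \<bar>?G\<bar> + B0 * (real (hgt x) * \<bar>g' x\<bar>))" by (simp add: algebra_simps)
      finally show "norm (complex_of_real (g x) * (E1 x - 1) - complex_of_real (g' x) * (E2 x - 1))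
          \<le> \<bar>t\<bar> * (B0 * \<bar>?G\<bar> + B0 * (real (hgt x) * \<bar>g' x\<bar>))" .
    qed
    also have "\<dots> = \<bar>t\<bar> * K" unfolding K_def by simp
    also have "\<dots> = K * norm (complex_of_real t)" by simp
    finally show ?thesis unfolding E1_def E2_def .
  qed
  show ?thesis
    by (rule bigoI[where c = K]) (rule always_eventually, use bound in blast)
qed
end
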